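(* Let $q>1$, $0<u<1$, let $T$ be a standard Young tableau of shape $\lambda$, and $N\ge0$. Let $P^N(T)$ be the probability that, at the end of interval $N$ of the Young Tableau Algorithm, the tableau obtained by numbering boxes in their order of creation is $T$. Then $P^N(T)=0$ if $\lambda$ has more than $N$ parts, and otherwise $$P^N(T)=\frac{u^{|T|}}{|GL(\lambda'_1,q)|}\cdot\frac{\prod_{r=1}^N(1-u/q^r)(1-1/q^r)}{\prod_{r=1}^{N-\lambda'_1}(1-1/q^r)}\cdot\prod_{(i,j)\in\lambda,\ j\ge2}\frac{q^{1-i}-q^{-A_{(i,j)}}}{q^{B_{(i,j)}}-1}.$$
   Context: $|GL(m,q)|=\prod_{k=0}^{m-1}(q^m-q^k)$. $\lambda'_s$ is the length of column $s$. $T_{(i,j)}$ is the entry of $T$ in row $i$, column $j$; for $j\ge2$, $A_{(i,j)}$ is the number of entries of column $j-1$ of $T$ that are less than $T_{(i,j)}$, and $B_{(i,j)}$ is the number of entries of column $1$ of $T$ less than $T_{(i,j)}$. Young Tableau Algorithm: coins indexed by $N\ge1$, coin $N$ showing heads with probability $u/q^N$, all flips independent. Start with $\lambda=\emptyset$, $N=1$. Flip coin $N$. If tails, interval $N$ ends; set $N\to N+1$ and flip the new coin. If heads, choose a column $S\ge1$ with $\Pr(S=1)=\frac{q^{N-\lambda'_1}-1}{q^N-1}$ and $\Pr(S=s)=\frac{q^{N-\lambda'_s}-q^{N-\lambda'_{s-1}}}{q^N-1}$ for $s>1$ (from the current $\lambda$), add a box at the bottom of column $S$, and flip coin $N$ again.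 The $k$-th box created receives the label $k$. *)

theory Defs
  imports Complex_Main
begin

text \<open>Partitions as weakly decreasing lists of positive parts; cells are (row, column),
  both 1-indexed.\<close>

definition is_partition :: "nat list \<Rightarrow> bool" where
  "is_partition lam \<longleftrightarrow> sorted_wrt (\<ge>) lam \<and> 0 \<notin> set lam"

definition cells :: "nat list \<Rightarrow> (nat \<times> nat) set" where
  "cells lam = {(i, j). 1 \<le> i \<and> i \<le> length lam \<and> 1 \<le> j \<and> j \<le> lam ! (i - 1)}"

definition psize :: "nat list \<Rightarrow> nat" where
  "psize lam = sum_list lam"

definition col_len :: "nat list \<Rightarrow> nat \<Rightarrow> nat" where
  "col_len lam j = card {i. (i, j) \<in> cells lam}"

definition is_SYT :: "nat list \<Rightarrow> (nat \<times> nat \<Rightarrow> nat) \<Rightarrow> bool" where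
  "is_SYT lam T \<longleftrightarrow> bij_betw T (cells lam) {1..psize lam}
     \<and> (\<forall>i j. (i, j + 1) \<in> cells lam \<longrightarrow> T (i, j) < T (i, j + 1))
     \<and> (\<forall>i j. (i + 1, j) \<in> cells lam \<longrightarrow> T (i, j) < T (i + 1, j))"

definition GL_card :: "nat \<Rightarrow> real \<Rightarrow> real" where
  "GL_card m q = (\<Prod>k<m. q ^ m - q ^ k)"

definition A_stat :: "nat list \<Rightarrow> (nat \<times> nat \<Rightarrow> nat) \<Rightarrow> nat \<times> nat \<Rightarrow> nat" where
  "A_stat lam T c = card {i'. (i', snd c - 1) \<in> cells lam \<and> T (i', snd c - 1) < T c}"

definition B_stat :: "nat list \<Rightarrow> (nat \<times> nat \<Rightarrow> nat) \<Rightarrow> nat \<times> nat \<Rightarrow> nat" where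
  "B_stat lam T c = card {i'. (i', 1) \<in> cells lam \<and> T (i', 1) < T c}"

definition cell_of :: "nat list \<Rightarrow> (nat \<times> nat \<Rightarrow> nat) \<Rightarrow> nat \<Rightarrow> nat \<times> nat" where
  "cell_of lam T k = (THE c. c \<in> cells lam \<and> T c = k)"

text \<open>Length of column s of the shape formed by the boxes with labels < k
  (the current shape just before box k is created).\<close>
definition col_before :: "nat list \<Rightarrow> (nat \<times> nat \<Rightarrow> nat) \<Rightarrow> nat \<Rightarrow> nat \<Rightarrow> nat" where
  "col_before lam T k s = card {i. (i, s) \<in> cells lam \<and> T (i, s) < k}"

text \<open>Probability that, during interval r, after a heads the column chosen for box k
  is the column of box k in T (given the current shape determined by T).\<close>
definition col_choice :: "real \<Rightarrow> nat list \<Rightarrow> (nat \<times> nat \<Rightarrow> nat) \<Rightarrow> nat \<Rightarrow> nat \<Rightarrow> real" where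
  "col_choice q lam T r k =
     (let s = snd (cell_of lam T k); L = col_before lam T k in
      if s = 1 then (q powi (int r - int (L 1)) - 1) / (q ^ r - 1)
      else (q powi (int r - int (L s)) - q powi (int r - int (L (s - 1)))) / (q ^ r - 1))"

text \<open>P^N(T): sum over all ways of distributing the n = |T| box creations among the
  intervals 1..N (weakly increasing list giving the interval of box k) of the
  probability of the corresponding sequence of coin flips and column choices;
  each interval r = 1..N ends with one tails of coin r.\<close>
definition PN :: "real \<Rightarrow> real \<Rightarrow> nat \<Rightarrow> nat list \<Rightarrow> (nat \<times> nat \<Rightarrow> nat) \<Rightarrow> real" where
  "PN q u N lam T =
     (\<Sum>iv \<in> {xs. length xs = psize lam \<and> sorted xs \<and> set xs \<subseteq> {1..N}}.
        (\<Prod>k\<in>{1..psize lam}. u / q ^ (iv ! (k - 1)) * col_choice q lam T (iv ! (k - 1)) k))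
     * (\<Prod>r\<in>{1..N}. 1 - u / q ^ r)"

end

theory Submission
  imports Defs
begin


definition SL :: "(nat \<Rightarrow> nat \<Rightarrow> real) \<Rightarrow> nat \<Rightarrow> nat \<Rightarrow> real" where
  "SL f k r = (\<Sum>iv \<in> {xs. length xs = k \<and> sorted xs \<and> set xs \<subseteq> {1..r}}.
        (\<Prod>j\<in>{1..k}. f j (iv ! (j - 1))))"

lemma fin_lists: "finite {xs. length xs = k \<and> sorted xs \<and> set xs \<subseteq> {1..(r::nat)}}"
proof -
  have "finite {xs. set xs \<subseteq> {1..r} \<and> length xs = k}"
    by (rule finite_lists_length_eq) simp
  then show ?thesis by (rule rev_finite_subset) auto
qed

lemma SL_0: "SL f 0 r = 1"
proof -
  have "{xs. length xs = 0 \<and> sorted xs \<and> set xs \<subseteq> {1..r}} = {[]}" by auto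
  then show ?thesis by (simp add: SL_def)
qed

lemma SL_Suc_0: "SL f (Suc k) 0 = 0"
proof -
  have "{xs. length xs = Suc k \<and> sorted xs \<and> set xs \<subseteq> {1..0::nat}} = {}"
    by (auto simp: length_Suc_conv)
  then show ?thesis unfolding SL_def by (simp only: sum.empty)
qed

lemma SL_Suc_Suc: "SL f (Suc k) (Suc r) = SL f (Suc k) r + f (Suc k) (Suc r) * SL f k (Suc r)"
proof -
  define A where "A = {xs. length xs = Suc k \<and> sorted xs \<and> set xs \<subseteq> {1..Suc r}}"
  define A1 where "A1 = {xs. length xs = Suc k \<and> sorted xs \<and> set xs \<subseteq> {1..r}}"
  define B where "B = {xs. length xs = k \<and> sorted xs \<and> set xs \<subseteq> {1..Suc r}}"
  define g where "g = (\<lambda>iv. \<Prod>j\<in>{1..Suc k}. f j (iv ! (j - 1)))"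
  have AU: "A = A1 \<union> (\<lambda>xs. xs @ [Suc r]) ` B"
  proof (rule set_eqI, rule iffI)
    fix xs assume "xs \<in> A"
    then have l: "length xs = Suc k" and s: "sorted xs" and st: "set xs \<subseteq> {1..Suc r}"
      by (auto simp: A_def)
    obtain ys y where xs: "xs = ys @ [y]" using l by (cases xs rule: rev_exhaust) auto
    show "xs \<in> A1 \<union> (\<lambda>xs. xs @ [Suc r]) ` B"
    proof (cases "y = Suc r")
      case True
      then have "ys \<in> B" using l s st xs by (auto simp: B_def sorted_append)
      then show ?thesis using True xs by auto
    next
      case False
      then have "y \<le> r" using st xs by auto
      then have "set xs \<subseteq> {1..r}" using s st xs by (force simp: sorted_append)
      then show ?thesis using l s by (auto simp: A1_def)
    qed
  next
    fix xs assume "xs \<in> A1 \<union> (\<lambda>xs. xs @ [Suc r]) ` B"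
    then show "xs \<in> A"
      by (auto simp: A1_def A_def B_def sorted_append subset_iff)
  qed
  have disj: "A1 \<inter> (\<lambda>xs. xs @ [Suc r]) ` B = {}" by (auto simp: A1_def)
  have finA1: "finite A1" unfolding A1_def by (rule fin_lists)
  have finB: "finite B" unfolding B_def by (rule fin_lists)
  have "SL f (Suc k) (Suc r) = sum g A" by (simp add: SL_def A_def g_def)
  also have "\<dots> = sum g A1 + sum g ((\<lambda>xs. xs @ [Suc r]) ` B)"
    unfolding AU using finA1 finB disj by (simp add: sum.union_disjoint)
  also have "sum g A1 = SL f (Suc k) r" by (simp add: SL_def A1_def g_def)
  also have "sum g ((\<lambda>xs. xs @ [Suc r]) ` B) = sum (\<lambda>xs. g (xs @ [Suc r])) B"
    by (rule sum.reindex[unfolded comp_def]) (auto simp: inj_on_def)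
  also have "\<dots> = sum (\<lambda>xs. f (Suc k) (Suc r) * (\<Prod>j\<in>{1..k}. f j (xs ! (j - 1)))) B"
  proof (rule sum.cong[OF refl])
    fix xs assume "xs \<in> B"
    then have l: "length xs = k" by (simp add: B_def)
    have "g (xs @ [Suc r]) = f (Suc k) ((xs @ [Suc r]) ! k) * (\<Prod>j\<in>{1..k}. f j ((xs @ [Suc r]) ! (j - 1)))"
      by (simp add: g_def prod.cl_ivl_Suc)
    also have "(\<Prod>j\<in>{1..k}. f j ((xs @ [Suc r]) ! (j - 1))) = (\<Prod>j\<in>{1..k}. f j (xs ! (j - 1)))"
      by (rule prod.cong[OF refl]) (auto simp: nth_append l)
    moreover have "(xs @ [Suc r]) ! k = Suc r" using l by (simp add: nth_append)
    ultimately show "g (xs @ [Suc r]) = f (Suc k) (Suc r) * (\<Prod>j\<in>{1..k}. f j (xs ! (j - 1)))"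
      by simp
  qed
  also have "\<dots> = f (Suc k) (Suc r) * SL f k (Suc r)"
    by (simp add: SL_def B_def sum_distrib_left)
  finally show ?thesis .
qed



definition PP :: "real \<Rightarrow> nat \<Rightarrow> real" where
  "PP q r = (\<Prod>t\<in>{1..r}. 1 - 1 / q ^ t)"

definition KK :: "real \<Rightarrow> nat \<Rightarrow> nat \<Rightarrow> real" where
  "KK q m r = (if m \<le> r then PP q r / PP q (r - m) else 0)"

lemma PP_Suc: "PP q (Suc n) = PP q n * (1 - 1 / q ^ Suc n)"
  by (simp add: PP_def prod.cl_ivl_Suc)

lemma PP_nz: "q > 1 \<Longrightarrow> PP q n \<noteq> 0"
proof (induction n)
  case 0 then show ?case by (simp add: PP_def)
next
  case (Suc n)
  have "q ^ Suc n > 1" using Suc.prems by (intro one_less_power) auto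
  then have "1 - 1 / q ^ Suc n \<noteq> 0" by auto
  then show ?case using Suc by (simp add: PP_Suc)
qed

lemma KK_step:
  assumes q: "q > 1"
  shows "KK q m r * (q ^ Suc r - 1) = KK q m (Suc r) * (q ^ Suc r - q ^ m)"
proof (cases "m \<le> r")
  case True
  define d where "d = r - m"
  have r: "r = m + d" using True by (simp add: d_def)
  have e: "Suc r - m = Suc d" using True by (simp add: d_def)
  have Pd: "PP q d \<noteq> 0" using PP_nz q by blast
  define x where "x = q ^ Suc d"
  define y where "y = q ^ m"
  have x1: "x > 1" using q unfolding x_def by (intro one_less_power) auto
  have y0: "y > 0" using q by (simp add: y_def)
  have qs: "q ^ Suc r = x * y" by (simp add: x_def y_def r power_add[symmetric] add.commute)
  have k: "KK q m (Suc r) = PP q r * (1 - 1 / q ^ Suc r) / (PP q d * (1 - 1 / q ^ Suc d))"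
    unfolding KK_def e PP_Suc using True by simp
  have "KK q m r * (q ^ Suc r - 1) = PP q r / PP q d * (x * y - 1)"
    unfolding qs using True by (simp add: KK_def d_def)
  also have "\<dots> = PP q r * (1 - 1 / (x * y)) / (PP q d * (1 - 1 / x)) * (x * y - y)"
    using x1 y0 Pd by (simp add: field_simps)
  also have "PP q r * (1 - 1 / (x * y)) / (PP q d * (1 - 1 / x)) * (x * y - y) = KK q m (Suc r) * (q ^ Suc r - q ^ m)"
    unfolding k qs x_def[symmetric] y_def[symmetric] by (rule refl)
  finally show ?thesis .
next
  case False
  then show ?thesis by (cases "m = Suc r") (auto simp: KK_def)
qed

lemma aux: "(a::real) \<noteq> 0 \<Longrightarrow> P / Pd = a * (P / (Pd * a))"
  by simp

lemma KK_col1: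
  assumes q: "q > 1"
  shows "KK q (Suc m) (Suc r) = (1 - q ^ m / q ^ Suc r) * KK q m (Suc r)"
proof (cases "m \<le> r")
  case True
  define d where "d = r - m"
  have r: "r = m + d" using True by (simp add: d_def)
  have e: "Suc r - m = Suc d" using True by (simp add: d_def)
  have Pd: "PP q d \<noteq> 0" using PP_nz q by blast
  have qd: "q ^ Suc d > 1" using q by (intro one_less_power) auto
  have h: "q ^ m / q ^ Suc r = 1 / q ^ Suc d" using q by (simp add: r power_add)
  have nz: "1 - 1 / q ^ Suc d \<noteq> 0" using qd by auto
  have k2: "KK q m (Suc r) = PP q (Suc r)/(PP q d * (1 - 1/q^Suc d))"
    unfolding KK_def e PP_Suc[of q d] using True by simp
  have "KK q (Suc m) (Suc r) = PP q (Suc r) / PP q d" using True by (simp add: KK_def d_def)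
  also have "\<dots> = (1 - 1 / q ^ Suc d) * (PP q (Suc r) / (PP q d * (1 - 1 / q ^ Suc d)))"
    using nz by (rule aux)
  also have "\<dots> = (1 - q ^ m / q ^ Suc r) * KK q m (Suc r)"
    using True by (simp only: k2 h)
  finally show ?thesis .
next
  case False
  then show ?thesis using q by (cases "m = Suc r") (auto simp: KK_def)
qed

definition GL2 :: "nat \<Rightarrow> real \<Rightarrow> real" where
  "GL2 m q = (\<Prod>k<m. q ^ k) * (\<Prod>i<m. q ^ Suc i - 1)"

lemma GL_card_eq: "GL_card m q = GL2 m q"
proof -
  have "GL_card m q = (\<Prod>k<m. q ^ k * (q ^ (m - k) - 1))"
    unfolding GL_card_def
  proof (rule prod.cong[OF refl])
    fix k assume "k \<in> {..<m}"
    then have "q ^ m = q ^ k * q ^ (m - k)" by (simp add: power_add[symmetric])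
    then show "q ^ m - q ^ k = q ^ k * (q ^ (m - k) - 1)" by (simp add: algebra_simps)
  qed
  also have "\<dots> = (\<Prod>k<m. q ^ k) * (\<Prod>k<m. q ^ (m - k) - 1)" by (rule prod.distrib)
  also have "(\<Prod>k<m. q ^ (m - k) - 1) = (\<Prod>k<m. (\<lambda>i. q ^ Suc i - 1) (m - Suc k))"
    by (rule prod.cong[OF refl]) (auto simp: Suc_diff_Suc)
  also have "\<dots> = (\<Prod>i<m. q ^ Suc i - 1)" by (rule prod.nat_diff_reindex)
  finally show ?thesis by (simp add: GL2_def)
qed

lemma GL_Suc: "GL_card (Suc m) q = GL_card m q * q ^ m * (q ^ Suc m - 1)"
  by (simp add: GL_card_eq GL2_def)

lemma GL_pos: assumes "q > 1" shows "GL_card m q > 0"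
proof -
  have "(\<Prod>k<m. q ^ k) > 0" using assms by (intro prod_pos) auto
  moreover have "(\<Prod>i<m. q ^ Suc i - 1) > 0"
  proof (intro prod_pos)
    fix i assume "i \<in> {..<m}"
    have "q ^ Suc i > 1" using assms by (intro one_less_power) auto
    then show "q ^ Suc i - 1 > 0" by simp
  qed
  ultimately show ?thesis by (simp add: GL_card_eq GL2_def)
qed



lemma alg1:
  fixes Q Qm E y G K1 K1r Z u C :: real
  assumes "Q > 0" "Qm > 0" "y > 0" "G > 0" "E > 0"
    and "K1r * Qm = K1 * (Qm - E)" and "K1 = (1 - y / Q) * Z"
  shows "u ^ Suc k * C * K1 / (G * y * E)
       = u ^ Suc k * C * K1r / (G * y * E) + u * (1 / y - 1 / Q) / Qm * (u ^ k * C * Z / G)"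
proof -
  have n1: "Qm \<noteq> 0" "E \<noteq> 0" "y \<noteq> 0" "G \<noteq> 0" "Q \<noteq> 0" using assms by auto
  have K1r: "K1r = K1 * (Qm - E) / Qm" using assms(6) n1 by (simp add: eq_divide_eq)
  show ?thesis unfolding K1r assms(7) using n1 by (simp add: field_simps)
qed

lemma alg2:
  fixes Qm ym G Kr Ks u C a :: real
  assumes "Qm > 0" "ym > 0" "G > 0" and "Kr * Qm = Ks * (Qm - ym)"
  shows "u ^ Suc k * (C * (a / ym)) * Ks / G
       = u ^ Suc k * (C * (a / ym)) * Kr / G + u * a / Qm * (u ^ k * C * Ks / G)"
proof -
  have n1: "Qm \<noteq> 0" "ym \<noteq> 0" "G \<noteq> 0" using assms by auto
  have Kr: "Kr = Ks * (Qm - ym) / Qm" using assms(4) n1 by (simp add: eq_divide_eq)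
  show ?thesis unfolding Kr using n1 by (simp add: field_simps)
qed

lemma SL_closed:
  fixes q u :: real and M :: "nat \<Rightarrow> nat" and col1 :: "nat \<Rightarrow> bool"
  assumes q: "q > 1"
    and H0: "M 1 = 0"
    and Hc: "\<And>j. 1 \<le> j \<Longrightarrow> j \<le> n \<Longrightarrow> col1 j \<Longrightarrow>
              M (Suc j) = Suc (M j) \<and> (\<forall>r. f j r = u * (1 / q ^ M j - 1 / q ^ r) / (q ^ r - 1))"
    and Hn: "\<And>j. 1 \<le> j \<Longrightarrow> j \<le> n \<Longrightarrow> \<not> col1 j \<Longrightarrow>
              M (Suc j) = M j \<and> M j \<ge> 1 \<and> (\<forall>r. f j r = u * a j / (q ^ r - 1))"
  shows "k \<le> n \<Longrightarrow> SL f k r = u ^ k * (\<Prod>j\<in>{j\<in>{1..k}. \<not> col1 j}. a j / (q ^ M j - 1))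
                      * (KK q (M (Suc k)) r / GL_card (M (Suc k)) q)"
proof (induction k arbitrary: r)
  case 0
  have "KK q 0 r = 1" using PP_nz[OF q] by (simp add: KK_def)
  then show ?case using H0 by (simp add: SL_0 GL_card_def)
next
  case (Suc k)
  define C where "C = (\<Prod>j\<in>{j\<in>{1..k}. \<not> col1 j}. a j / (q ^ M j - 1))"
  define m where "m = M (Suc k)"
  have kn: "k \<le> n" "1 \<le> Suc k" "Suc k \<le> n" using Suc.prems by auto
  have IHk: "\<And>r. SL f k r = u ^ k * C * (KK q m r / GL_card m q)"
    using Suc.IH kn by (simp add: C_def m_def)
  have Gm: "GL_card m q > 0" using GL_pos[OF q] .
  show ?case
  proof (cases "col1 (Suc k)")
    case True
    with Hc[OF kn(2,3)] have Ms: "M (Suc (Suc k)) = Suc m"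
      and f: "\<And>r. f (Suc k) r = u * (1 / q ^ m - 1 / q ^ r) / (q ^ r - 1)"
      by (auto simp: m_def)
    have Cs: "(\<Prod>j\<in>{j\<in>{1..Suc k}. \<not> col1 j}. a j / (q ^ M j - 1)) = C"
    proof -
      have "{j\<in>{1..Suc k}. \<not> col1 j} = {j\<in>{1..k}. \<not> col1 j}" using True by (auto simp: le_Suc_eq)
      then show ?thesis by (simp add: C_def)
    qed
    show ?thesis unfolding Cs Ms
    proof (induction r)
      case 0
      show ?case by (simp add: SL_Suc_0 KK_def)
    next
      case (Suc r)
      have Q: "q ^ Suc r > 1" using q by (intro one_less_power) auto
      have y: "q ^ m > 0" using q by simp
      have qy: "q * q ^ m > 1" using q one_less_power[of q "Suc m"] by simp
      have st: "KK q (Suc m) r * (q ^ Suc r - 1) = KK q (Suc m) (Suc r) * (q ^ Suc r - q * q ^ m)"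
        using KK_step[OF q, of "Suc m" r] by simp
      have GS: "GL_card (Suc m) q = GL_card m q * q ^ m * (q * q ^ m - 1)" using GL_Suc by simp
      have "SL f (Suc k) (Suc r) = SL f (Suc k) r + f (Suc k) (Suc r) * SL f k (Suc r)"
        by (rule SL_Suc_Suc)
      also have "\<dots> = u ^ Suc k * C * KK q (Suc m) (Suc r) / GL_card (Suc m) q"
        unfolding Suc.IH IHk f GS
        using alg1[OF _ _ y Gm _ _ KK_col1[OF q, of m r], of "q ^ Suc r - 1" "q * q ^ m - 1" "KK q (Suc m) r" u k C] Q qy st
        by (simp add: mult.assoc)
      finally show ?case by simp
    qed
  next
    case False
    with Hn[OF kn(2,3)] have Ms: "M (Suc (Suc k)) = m" and m1: "m \<ge> 1"
      and f: "\<And>r. f (Suc k) r = u * a (Suc k) / (q ^ r - 1)"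
      by (auto simp: m_def)
    have Cs: "(\<Prod>j\<in>{j\<in>{1..Suc k}. \<not> col1 j}. a j / (q ^ M j - 1)) = C * (a (Suc k) / (q ^ m - 1))"
    proof -
      have "{j\<in>{1..Suc k}. \<not> col1 j} = insert (Suc k) {j\<in>{1..k}. \<not> col1 j}" using False by (auto simp: le_Suc_eq)
      then show ?thesis by (simp add: C_def m_def mult.commute)
    qed
    show ?thesis unfolding Cs Ms
    proof (induction r)
      case 0
      show ?case using m1 by (simp add: SL_Suc_0 KK_def)
    next
      case (Suc r)
      have Q: "q ^ Suc r > 1" using q by (intro one_less_power) auto
      have y: "q ^ m > 1" using q m1 by (intro one_less_power) auto
      have "SL f (Suc k) (Suc r) = SL f (Suc k) r + f (Suc k) (Suc r) * SL f k (Suc r)"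
        by (rule SL_Suc_Suc)
      also have "\<dots> = u ^ Suc k * (C * (a (Suc k) / (q ^ m - 1))) * KK q m (Suc r) / GL_card m q"
        unfolding Suc.IH IHk f
        using alg2[OF _ _ Gm, of "q ^ Suc r - 1" "q ^ m - 1" "KK q m r" "KK q m (Suc r)" u k C "a (Suc k)"] Q y KK_step[OF q, of m r]
        by (simp add: mult.assoc)
      finally show ?case by simp
    qed
  qed
qed



lemma cells_left: "(i, j') \<in> cells lam \<Longrightarrow> 1 \<le> j \<Longrightarrow> j \<le> j' \<Longrightarrow> (i, j) \<in> cells lam"
  by (auto simp: cells_def)

lemma cells_up:
  assumes "is_partition lam" "(i', j) \<in> cells lam" "1 \<le> i" "i \<le> i'"
  shows "(i, j) \<in> cells lam"
proof (cases "i = i'")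
  case True then show ?thesis using assms by simp
next
  case False
  have s: "sorted_wrt (\<ge>) lam" using assms(1) by (simp add: is_partition_def)
  have "i - 1 < i' - 1" "i' - 1 < length lam" using assms False by (auto simp: cells_def)
  then have "lam ! (i - 1) \<ge> lam ! (i' - 1)" using sorted_wrt_nth_less[OF s] by blast
  then show ?thesis using assms by (auto simp: cells_def)
qed

lemma syt_row: "is_SYT lam T \<Longrightarrow> (i, j + 1) \<in> cells lam \<Longrightarrow> T (i, j) < T (i, j + 1)"
  unfolding is_SYT_def by blast

lemma syt_col: "is_SYT lam T \<Longrightarrow> (i + 1, j) \<in> cells lam \<Longrightarrow> T (i, j) < T (i + 1, j)"
  unfolding is_SYT_def by blast

lemma syt_bij: "is_SYT lam T \<Longrightarrow> bij_betw T (cells lam) {1..psize lam}"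
  unfolding is_SYT_def by blast

lemma row_chain:
  assumes "is_SYT lam T" "1 \<le> j"
  shows "(i, j + Suc d) \<in> cells lam \<Longrightarrow> T (i, j) < T (i, j + Suc d)"
proof (induction d)
  case 0
  then show ?case using syt_row[OF assms(1), of i j] by simp
next
  case (Suc d)
  have "(i, j + Suc d) \<in> cells lam" by (rule cells_left[OF Suc.prems]) (use assms(2) in simp_all)
  then have "T (i, j) < T (i, j + Suc d)" using Suc.IH by blast
  moreover have "T (i, j + Suc d) < T (i, j + Suc d + 1)"
    using syt_row[OF assms(1), of i "j + Suc d"] Suc.prems by simp
  ultimately show ?case by simp
qed

lemma row_lt:
  assumes "is_SYT lam T" "1 \<le> j" "j < j'" "(i, j') \<in> cells lam"
  shows "T (i, j) < T (i, j')"
proof -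
  obtain d where "j' = Suc (j + d)" using less_imp_Suc_add[OF assms(3)] by (elim exE)
  then show ?thesis using row_chain[OF assms(1,2), of i d] assms(4) by simp
qed

lemma col_chain:
  assumes "is_partition lam" "is_SYT lam T" "1 \<le> i"
  shows "(i + Suc d, j) \<in> cells lam \<Longrightarrow> T (i, j) < T (i + Suc d, j)"
proof (induction d)
  case 0
  then show ?case using syt_col[OF assms(2), of i j] by simp
next
  case (Suc d)
  have "(i + Suc d, j) \<in> cells lam" by (rule cells_up[OF assms(1) Suc.prems]) (use assms(3) in simp_all)
  then have "T (i, j) < T (i + Suc d, j)" using Suc.IH by blast
  moreover have "T (i + Suc d, j) < T (i + Suc d + 1, j)"
    using syt_col[OF assms(2), of "i + Suc d" j] Suc.prems by simp
  ultimately show ?case by simp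
qed

lemma col_lt:
  assumes "is_partition lam" "is_SYT lam T" "1 \<le> i" "i < i'" "(i', j) \<in> cells lam"
  shows "T (i, j) < T (i', j)"
proof -
  obtain d where "i' = Suc (i + d)" using less_imp_Suc_add[OF assms(4)] by (elim exE)
  then show ?thesis using col_chain[OF assms(1,2,3), of d j] assms(5) by simp
qed

lemma fin_col: "finite {i. (i, s) \<in> cells lam}"
  by (rule finite_subset[of _ "{1..length lam}"]) (auto simp: cells_def)

lemma col_before_self:
  assumes "is_partition lam" "is_SYT lam T" "(i, s) \<in> cells lam"
  shows "col_before lam T (T (i, s)) s = i - 1"
proof -
  have i1: "1 \<le> i" using assms(3) by (simp add: cells_def)
  have "{i'. (i', s) \<in> cells lam \<and> T (i', s) < T (i, s)} = {1..<i}"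
  proof (rule set_eqI, rule iffI)
    fix i' assume h: "i' \<in> {i'. (i', s) \<in> cells lam \<and> T (i', s) < T (i, s)}"
    then have "1 \<le> i'" by (simp add: cells_def)
    moreover have "i' < i"
    proof (rule ccontr)
      assume "\<not> i' < i"
      then have "i = i' \<or> i < i'" by auto
      then show False using h col_lt[OF assms(1,2) i1, of i' s] by auto
    qed
    ultimately show "i' \<in> {1..<i}" by simp
  next
    fix i' assume "i' \<in> {1..<i}"
    then show "i' \<in> {i'. (i', s) \<in> cells lam \<and> T (i', s) < T (i, s)}"
      using cells_up[OF assms(1) assms(3), of i'] col_lt[OF assms(1,2), of i' i s] assms(3) by auto
  qed
  then show ?thesis by (simp add: col_before_def)
qed

lemma M_Suc:
  assumes "is_SYT lam T" "(i, s) \<in> cells lam"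
  shows "col_before lam T (Suc (T (i, s))) 1 = col_before lam T (T (i, s)) 1 + (if s = 1 then 1 else 0)"
proof -
  have inj: "inj_on T (cells lam)" using syt_bij[OF assms(1)] by (simp add: bij_betw_def)
  define S where "S = {i'. (i', 1) \<in> cells lam \<and> T (i', 1) < T (i, s)}"
  define E where "E = {i'. (i', 1) \<in> cells lam \<and> T (i', 1) = T (i, s)}"
  have U: "{i'. (i', 1) \<in> cells lam \<and> T (i', 1) < Suc (T (i, s))} = S \<union> E"
    by (auto simp: S_def E_def)
  have fS: "finite S" by (rule finite_subset[OF _ fin_col[of 1 lam]]) (auto simp: S_def)
  have dj: "S \<inter> E = {}" by (auto simp: S_def E_def)
  have E: "E = (if s = 1 then {i} else {})"
  proof (rule set_eqI)
    fix x
    show "x \<in> E \<longleftrightarrow> x \<in> (if s = 1 then {i} else {})"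
    proof
      assume "x \<in> E"
      then have "(x, 1) \<in> cells lam" "T (x, 1) = T (i, s)" by (auto simp: E_def)
      then have "(x, 1) = (i, s)" using inj_onD[OF inj] assms(2) by blast
      then show "x \<in> (if s = 1 then {i} else {})" by auto
    next
      assume "x \<in> (if s = 1 then {i} else {})"
      then show "x \<in> E" using assms(2) by (auto simp: E_def split: if_splits)
    qed
  qed
  show ?thesis unfolding col_before_def U S_def[symmetric]
    using fS dj E by (simp add: card_Un_disjoint)
qed

lemma M_pos:
  assumes "is_SYT lam T" "(i, s) \<in> cells lam" "s \<noteq> 1"
  shows "col_before lam T (T (i, s)) 1 \<ge> 1"
proof -
  have s1: "1 < s" using assms by (auto simp: cells_def)
  have "(i, 1) \<in> cells lam" using cells_left[OF assms(2)] s1 by auto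
  moreover have "T (i, 1) < T (i, s)" using row_lt[OF assms(1) _ s1 assms(2)] by simp
  ultimately have "i \<in> {i'. (i', 1) \<in> cells lam \<and> T (i', 1) < T (i, s)}" by simp
  moreover have "finite {i'. (i', 1) \<in> cells lam \<and> T (i', 1) < T (i, s)}"
    by (rule finite_subset[OF _ fin_col[of 1 lam]]) auto
  ultimately have "card {i'. (i', 1) \<in> cells lam \<and> T (i', 1) < T (i, s)} \<noteq> 0" by auto
  then show ?thesis by (simp add: col_before_def)
qed



lemma pw1: "(q::real) \<noteq> 0 \<Longrightarrow> q powi (int r - int m) = q ^ r / q ^ m"
  by (simp add: power_int_diff)

lemma pw2: "(q::real) \<noteq> 0 \<Longrightarrow> q powi (int r + e) = q ^ r * q powi e"
  by (simp add: power_int_add)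

lemma aux2: "(Q::real) \<noteq> 0 \<Longrightarrow> u / Q * ((Q * x - Q * y) / D) = u * (x - y) / D"
  by (simp add: right_diff_distrib[symmetric])

theorem theorem5:
  fixes q u :: real and lam :: "nat list" and T :: "nat \<times> nat \<Rightarrow> nat" and N :: nat
  assumes "q > 1" and "0 < u" and "u < 1"
    and "is_partition lam" and "is_SYT lam T"
  shows "(length lam > N \<longrightarrow> PN q u N lam T = 0)
       \<and> (length lam \<le> N \<longrightarrow>
          PN q u N lam T =
            u ^ psize lam / GL_card (col_len lam 1) q
            * ((\<Prod>r\<in>{1..N}. (1 - u / q ^ r) * (1 - 1 / q ^ r))
               / (\<Prod>r\<in>{1..N - col_len lam 1}. 1 - 1 / q ^ r))
            * (\<Prod>c\<in>{c \<in> cells lam. 2 \<le> snd c}.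
                 (q powi (1 - int (fst c)) - q powi (- int (A_stat lam T c)))
                 / (q ^ B_stat lam T c - 1)))"
proof -
  note q = assms(1) and part = assms(4) and syt = assms(5)
  have q0: "q \<noteq> 0" using q by simp
  define n where "n = psize lam"
  have bij: "bij_betw T (cells lam) {1..n}" using syt_bij[OF syt] by (simp add: n_def)
  have inj: "inj_on T (cells lam)" using bij by (simp add: bij_betw_def)
  have img: "T ` cells lam = {1..n}" using bij by (simp add: bij_betw_def)
  have cell_of_T: "cell_of lam T (T c) = c" if c: "c \<in> cells lam" for c
    unfolding cell_of_def
  proof (rule the_equality)
    show "c \<in> cells lam \<and> T c = T c" using c by simp
  next
    fix c' assume "c' \<in> cells lam \<and> T c' = T c"
    then show "c' = c" using inj_onD[OF inj] c by blast
  qed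
  have cell_of_in: "cell_of lam T j \<in> cells lam \<and> T (cell_of lam T j) = j" if j: "j \<in> {1..n}" for j
  proof -
    obtain c where c: "c \<in> cells lam" "T c = j" using j img by (metis imageE)
    then show ?thesis using cell_of_T[OF c(1)] by simp
  qed
  define M where "M = (\<lambda>j. col_before lam T j 1)"
  define col1 where "col1 = (\<lambda>j. snd (cell_of lam T j) = 1)"
  define a where "a = (\<lambda>j. q powi (1 - int (fst (cell_of lam T j)))
        - q powi (- int (col_before lam T j (snd (cell_of lam T j) - 1))))"
  define f where "f = (\<lambda>j r. u / q ^ r * col_choice q lam T r j)"
  have M1: "M 1 = 0"
  proof -
    have "{i. (i, 1) \<in> cells lam \<and> T (i, 1) < 1} = {}"
    proof (rule ccontr)
      assume "{i. (i, 1) \<in> cells lam \<and> T (i, 1) < 1} \<noteq> {}"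
      then obtain i where "(i, 1) \<in> cells lam" "T (i, 1) < 1" by blast
      moreover have "T (i, 1) \<in> {1..n}" using img calculation(1) by blast
      ultimately show False by simp
    qed
    then show ?thesis unfolding M_def col_before_def by (simp only: card.empty)
  qed
  have Hc: "M (Suc j) = Suc (M j) \<and> (\<forall>r. f j r = u * (1 / q ^ M j - 1 / q ^ r) / (q ^ r - 1))"
    if j: "1 \<le> j" "j \<le> n" and c1: "col1 j" for j
  proof -
    obtain i s where cs: "cell_of lam T j = (i, s)" by (cases "cell_of lam T j")
    have cin: "(i, s) \<in> cells lam" and Tc: "T (i, s) = j" using cell_of_in[of j] j cs by auto
    have s1: "s = 1" using c1 cs by (simp add: col1_def)
    have "M (Suc j) = Suc (M j)" using M_Suc[OF syt cin] s1 Tc by (simp add: M_def)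
    moreover have "f j r = u * (1 / q ^ M j - 1 / q ^ r) / (q ^ r - 1)" for r
    proof -
      have "f j r = u / q ^ r * ((q powi (int r - int (M j)) - 1) / (q ^ r - 1))"
        by (simp add: f_def col_choice_def cs s1 M_def Let_def)
      also have "\<dots> = u * (1 / q ^ M j - 1 / q ^ r) / (q ^ r - 1)"
        using q0 by (simp add: pw1 field_simps)
      finally show ?thesis .
    qed
    ultimately show ?thesis by blast
  qed
  have Hn: "M (Suc j) = M j \<and> M j \<ge> 1 \<and> (\<forall>r. f j r = u * a j / (q ^ r - 1))"
    if j: "1 \<le> j" "j \<le> n" and c1: "\<not> col1 j" for j
  proof -
    obtain i s where cs: "cell_of lam T j = (i, s)" by (cases "cell_of lam T j")
    have cin: "(i, s) \<in> cells lam" and Tc: "T (i, s) = j" using cell_of_in[of j] j cs by auto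
    have s1: "s \<noteq> 1" using c1 cs by (simp add: col1_def)
    have i1: "1 \<le> i" using cin by (simp add: cells_def)
    have "M (Suc j) = M j" using M_Suc[OF syt cin] s1 Tc by (simp add: M_def)
    moreover have "M j \<ge> 1" using M_pos[OF syt cin s1] Tc by (simp add: M_def)
    moreover have "f j r = u * a j / (q ^ r - 1)" for r
    proof -
      define A where "A = col_before lam T j (s - 1)"
      have L: "col_before lam T j s = i - 1" using col_before_self[OF part syt cin] Tc by simp
      have e1: "int r - int (i - 1) = int r + (1 - int i)" using i1 by simp
      have e2: "int r - int A = int r + (- int A)" by simp
      have "f j r = u / q ^ r * ((q powi (int r - int (i - 1)) - q powi (int r - int A)) / (q ^ r - 1))"
        using s1 by (simp add: f_def col_choice_def cs L A_def Let_def del: One_nat_def)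
      also have "\<dots> = u / q ^ r * ((q ^ r * q powi (1 - int i) - q ^ r * q powi (- int A)) / (q ^ r - 1))"
        unfolding e1 e2 pw2[OF q0] ..
      also have "\<dots> = u * (q powi (1 - int i) - q powi (- int A)) / (q ^ r - 1)"
        by (rule aux2) (use q0 in simp)
      also have "\<dots> = u * a j / (q ^ r - 1)"
        by (simp add: a_def cs A_def)
      finally show ?thesis .
    qed
    ultimately show ?thesis by blast
  qed
  have SLc: "SL f n N = u ^ n * (\<Prod>j\<in>{j\<in>{1..n}. \<not> col1 j}. a j / (q ^ M j - 1))
                      * (KK q (M (Suc n)) N / GL_card (M (Suc n)) q)"
    using SL_closed[of q M n col1 f u a n N, OF q M1 Hc Hn] by simp
  have PNe: "PN q u N lam T = SL f n N * (\<Prod>r\<in>{1..N}. 1 - u / q ^ r)"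
    by (simp add: PN_def SL_def f_def n_def)
  have len: "col_len lam 1 = length lam"
  proof -
    have "{i. (i, 1) \<in> cells lam} = {1..length lam}"
    proof (rule set_eqI, rule iffI)
      fix i assume "i \<in> {i. (i, 1) \<in> cells lam}"
      then show "i \<in> {1..length lam}" by (simp add: cells_def)
    next
      fix i assume i: "i \<in> {1..length lam}"
      then have "lam ! (i - 1) \<in> set lam" by (intro nth_mem) auto
      then have "lam ! (i - 1) \<noteq> 0" using part by (metis is_partition_def)
      then show "i \<in> {i. (i, 1) \<in> cells lam}" using i by (simp add: cells_def)
    qed
    then show ?thesis by (simp add: col_len_def)
  qed
  have Mn: "M (Suc n) = col_len lam 1"
  proof -
    have "{i. (i, 1) \<in> cells lam \<and> T (i, 1) < Suc n} = {i. (i, 1) \<in> cells lam}"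
    proof (rule set_eqI, rule iffI)
      fix i assume "i \<in> {i. (i, 1) \<in> cells lam}"
      moreover then have "T (i, 1) \<in> {1..n}" using img by blast
      ultimately show "i \<in> {i. (i, 1) \<in> cells lam \<and> T (i, 1) < Suc n}" by simp
    qed simp
    then show ?thesis by (simp add: M_def col_before_def col_len_def)
  qed
  define S where "S = {c \<in> cells lam. 2 \<le> snd c}"
  have bS: "bij_betw T S {j\<in>{1..n}. \<not> col1 j}"
  proof -
    have "inj_on T S" using inj_on_subset[OF inj] by (simp add: S_def)
    moreover have "T ` S = {j\<in>{1..n}. \<not> col1 j}"
    proof (rule set_eqI, rule iffI)
      fix j assume "j \<in> T ` S"
      then obtain c where c: "c \<in> cells lam" "2 \<le> snd c" "j = T c" by (auto simp: S_def)
      then show "j \<in> {j\<in>{1..n}. \<not> col1 j}" using img cell_of_T[OF c(1)] by (auto simp: col1_def)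
    next
      fix j assume j: "j \<in> {j\<in>{1..n}. \<not> col1 j}"
      then have ci: "cell_of lam T j \<in> cells lam" "T (cell_of lam T j) = j" using cell_of_in by auto
      moreover have "snd (cell_of lam T j) \<ge> 1" using ci(1) by (auto simp: cells_def)
      moreover have "snd (cell_of lam T j) \<noteq> 1" using j by (simp add: col1_def)
      ultimately have "cell_of lam T j \<in> S" by (simp add: S_def)
      then show "j \<in> T ` S" using ci(2) by force
    qed
    ultimately show ?thesis by (simp add: bij_betw_def)
  qed
  have Cprod: "(\<Prod>j\<in>{j\<in>{1..n}. \<not> col1 j}. a j / (q ^ M j - 1))
      = (\<Prod>c\<in>S. (q powi (1 - int (fst c)) - q powi (- int (A_stat lam T c))) / (q ^ B_stat lam T c - 1))"
  proof -
    have "(\<Prod>j\<in>{j\<in>{1..n}. \<not> col1 j}. a j / (q ^ M j - 1)) = (\<Prod>c\<in>S. a (T c) / (q ^ M (T c) - 1))"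
      by (rule prod.reindex_bij_betw[OF bS, symmetric])
    also have "\<dots> = (\<Prod>c\<in>S. (q powi (1 - int (fst c)) - q powi (- int (A_stat lam T c))) / (q ^ B_stat lam T c - 1))"
    proof (rule prod.cong[OF refl])
      fix c assume "c \<in> S"
      then have c: "c \<in> cells lam" by (simp add: S_def)
      show "a (T c) / (q ^ M (T c) - 1) = (q powi (1 - int (fst c)) - q powi (- int (A_stat lam T c))) / (q ^ B_stat lam T c - 1)"
        by (simp add: a_def M_def cell_of_T[OF c] A_stat_def B_stat_def col_before_def)
    qed
    finally show ?thesis .
  qed
  have GLp: "GL_card (length lam) q > 0" using GL_pos[OF q] .
  show ?thesis
  proof (intro conjI impI)
    assume "length lam > N"
    then have "KK q (M (Suc n)) N = 0" using Mn len by (simp add: KK_def)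
    then show "PN q u N lam T = 0" using PNe SLc by simp
  next
    assume le: "length lam \<le> N"
    have KK: "KK q (length lam) N = PP q N / PP q (N - length lam)" using le by (simp add: KK_def)
    have Pn: "PP q (N - length lam) \<noteq> 0" using PP_nz[OF q] .
    have P2: "(\<Prod>r\<in>{1..N}. (1 - u / q ^ r) * (1 - 1 / q ^ r)) = (\<Prod>r\<in>{1..N}. 1 - u / q ^ r) * PP q N"
      by (simp add: PP_def prod.distrib)
    show "PN q u N lam T =
            u ^ psize lam / GL_card (col_len lam 1) q
            * ((\<Prod>r\<in>{1..N}. (1 - u / q ^ r) * (1 - 1 / q ^ r))
               / (\<Prod>r\<in>{1..N - col_len lam 1}. 1 - 1 / q ^ r))
            * (\<Prod>c\<in>{c \<in> cells lam. 2 \<le> snd c}.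
                 (q powi (1 - int (fst c)) - q powi (- int (A_stat lam T c)))
                 / (q ^ B_stat lam T c - 1))"
      unfolding PNe SLc Mn len P2 Cprod S_def[symmetric] n_def[symmetric] PP_def[symmetric]
      using Pn GLp by (simp add: KK field_simps)
  qed
qed


end
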